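(* Let $a\in\{-2,-1,0,1,2\}$. As formal power series in $q$ and $x$, $$\sum_{t\geq0} \widetilde{U}_t(a,q)x^t=\prod_{n=1}^{\infty}\frac{1}{(1+aq^{2n-1}+q^{2(2n-1)})(1-q^{2n})}\cdot \left(1+2\sum_{n\geq 1}te_n\left(\frac{x+a+2}{4}\right)q^{n^2}\right).$$
   Context: For $a\in\{-2,-1,0,1,2\}$ and integer $t\geq 0$, $\widetilde{U}_t(a,q)=\sum \prod_{k=1}^t \frac{q^{n_k}}{1+aq^{n_k}+q^{2n_k}}$, where the sum runs over all $t$-tuples of odd positive integers $n_1<n_2<\cdots<n_t$ (so $\widetilde{U}_0(a,q)=1$). $T_m$ denotes the Chebyshev polynomial of the first kind, $T_m(\cos\theta)=\cos(m\theta)$, and $te_n(x):=T_{2n}(\sqrt{x})$ (a polynomial in $x$). *)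

theory Defs
  imports "HOL-Analysis.Analysis" "HOL-Computational_Algebra.Formal_Power_Series"
    "HOL-Computational_Algebra.Polynomial"
begin

fun cheb :: "nat \<Rightarrow> real poly" where
  "cheb 0 = 1"
| "cheb (Suc 0) = [:0, 1:]"
| "cheb (Suc (Suc m)) = smult 2 [:0, 1:] * cheb (Suc m) - cheb m"

text \<open>te_n(x) = T_(2n)(sqrt x): T_(2n) is an even polynomial of degree 2n, so
  te_n is the polynomial whose k-th coefficient is the (2k)-th coefficient of T_(2n).\<close>
definition te :: "nat \<Rightarrow> real poly" where
  "te n = Poly (map (\<lambda>k. coeff (cheb (2 * n)) (2 * k)) [0..<Suc n])"

definition Ut :: "int \<Rightarrow> nat \<Rightarrow> 'a::{comm_ring_1,inverse} fps" where
  "Ut a t = infsum (\<lambda>S. \<Prod>n\<in>S. fps_X ^ n * inverse (1 + of_int a * fps_X ^ n + fps_X ^ (2 * n)))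
              {S. finite S \<and> card S = t \<and> (\<forall>n\<in>S. odd n)}"

definition fps_infprod :: "(nat \<Rightarrow> 'a::comm_ring_1 fps) \<Rightarrow> 'a fps" where
  "fps_infprod f = lim (\<lambda>N. \<Prod>n\<in>{1..N}. f n)"

end

theory Submission
  imports Defs "HOL-Computational_Algebra.Polynomial_FPS"
begin

unbundle no vec_syntax
notation fps_nth (infixl \<open>$\<close> 75)


definition eqv :: "nat \<Rightarrow> 'a::comm_ring_1 fps \<Rightarrow> 'a fps \<Rightarrow> bool" where
  "eqv M f g \<longleftrightarrow> (\<forall>k<M. f $ k = g $ k)"

lemma eqv_refl[simp]: "eqv M f f" by (simp add: eqv_def)
lemma eqv_sym: "eqv M f g \<Longrightarrow> eqv M g f" by (simp add: eqv_def)
lemma eqv_trans: "eqv M f g \<Longrightarrow> eqv M g h \<Longrightarrow> eqv M f h" by (simp add: eqv_def)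
lemma eqv_mono: "eqv M f g \<Longrightarrow> M' \<le> M \<Longrightarrow> eqv M' f g" by (simp add: eqv_def)

lemma eqv_mult: assumes "eqv M f f'" "eqv M g g'" shows "eqv M (f*g) (f'*g')"
  unfolding eqv_def
proof (intro allI impI)
  fix k assume k: "k < M"
  show "(f*g) $ k = (f'*g') $ k" unfolding fps_mult_nth
    by (rule sum.cong) (use assms k in \<open>auto simp: eqv_def\<close>)
qed

lemma eqv_add: assumes "eqv M f f'" "eqv M g g'" shows "eqv M (f+g) (f'+g')"
  using assms by (simp add: eqv_def)

lemma eqv_Xpow: "M \<le> r \<Longrightarrow> eqv M (fps_X ^ r * h) 0"
  by (simp add: eqv_def fps_X_power_mult_nth)

lemma eqv_one_minus_Xpow: "M \<le> r \<Longrightarrow> eqv M (1 - fps_X ^ r) 1"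
  by (auto simp: eqv_def)

lemma eqv_Xpow_mult_right: "M \<le> r \<Longrightarrow> eqv M (f * fps_X ^ r) 0"
  by (simp add: eqv_def fps_X_power_mult_right_nth)

lemma eqv_prod: "finite A \<Longrightarrow> (\<And>i. i \<in> A \<Longrightarrow> eqv M (f i) (g i)) \<Longrightarrow> eqv M (prod f A) (prod g A)"
  by (induction A rule: finite_induct) (auto intro: eqv_mult)

lemma eqv_sum: "finite A \<Longrightarrow> (\<And>i. i \<in> A \<Longrightarrow> eqv M (f i) (g i)) \<Longrightarrow> eqv M (sum f A) (sum g A)"
  by (induction A rule: finite_induct) (auto intro: eqv_add)

lemma eqv_cancel_inv:
  assumes "eqv M (f * u) (g * u)" "u * w = 1"
  shows "eqv M f g"
proof -
  have "eqv M (f*u*w) (g*u*w)" using assms(1) eqv_mult eqv_refl by blast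
  thus ?thesis using assms(2) by (simp add: mult.assoc)
qed

lemma eqv_inverse1:
  assumes "eqv M f 1" "f * w = 1" shows "eqv M w 1"
proof -
  have "eqv M (f*w) (1*w)" using assms(1) eqv_mult eqv_refl by blast
  thus ?thesis using assms(2) by (simp add: eqv_sym)
qed

lemma fps_mult_inverse_1:
  fixes f :: "'a::{comm_ring_1,inverse} fps"
  assumes "f $ 0 = 1" "inverse (1::'a) = 1"
  shows "f * inverse f = 1"
  using assms fps_right_inverse[of f 1] by (simp add: fps_inverse_def)

lemma fps_inverse_mult_1:
  fixes f :: "'a::{comm_ring_1,inverse} fps"
  assumes "f $ 0 = 1" "g $ 0 = 1" "inverse (1::'a) = 1"
  shows "inverse (f * g) = inverse f * inverse g"
proof -
  have fg: "(f*g) $ 0 = 1" using assms by simp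
  have 1: "(f*g) * (inverse f * inverse g) = 1"
    using fps_mult_inverse_1[OF assms(1,3)] fps_mult_inverse_1[OF assms(2,3)]
    by (metis mult.assoc mult.left_commute mult_1_right)
  have "inverse (f*g) = inverse (f*g) * ((f*g) * (inverse f * inverse g))" using 1 by simp
  also have "\<dots> = ((f*g) * inverse (f*g)) * (inverse f * inverse g)" by (simp add: ac_simps)
  also have "\<dots> = inverse f * inverse g" using fps_mult_inverse_1[OF fg assms(3)] by simp
  finally show ?thesis .
qed

definition hom :: "('a::comm_ring_1 \<Rightarrow> 'b::comm_ring_1) \<Rightarrow> bool" where
  "hom h \<longleftrightarrow> (\<forall>x y. h (x+y) = h x + h y) \<and> (\<forall>x y. h (x*y) = h x * h y) \<and> h 1 = 1"

lemma hom_add: "hom h \<Longrightarrow> h (x+y) = h x + h y" by (simp add: hom_def)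
lemma hom_mult: "hom h \<Longrightarrow> h (x*y) = h x * h y" by (simp add: hom_def)
lemma hom_1: "hom h \<Longrightarrow> h 1 = 1" by (simp add: hom_def)
lemma hom_0: "hom h \<Longrightarrow> h 0 = 0"
  using hom_add[of h 0 0] by simp
lemma hom_uminus: "hom h \<Longrightarrow> h (-x) = - h x"
  using hom_add[of h x "-x"] hom_0[of h] by (simp add: eq_neg_iff_add_eq_0 add.commute)
lemma hom_diff: "hom h \<Longrightarrow> h (x-y) = h x - h y"
  using hom_add[of h x "-y"] hom_uminus[of h y] by simp
lemma hom_sum: "hom h \<Longrightarrow> h (sum f A) = sum (\<lambda>i. h (f i)) A"
  by (induction A rule: infinite_finite_induct) (auto simp: hom_0 hom_add)
lemma hom_prod: "hom h \<Longrightarrow> h (prod f A) = prod (\<lambda>i. h (f i)) A"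
  by (induction A rule: infinite_finite_induct) (auto simp: hom_1 hom_mult)
lemma hom_power: "hom h \<Longrightarrow> h (x ^ n) = h x ^ n"
  by (induction n) (auto simp: hom_1 hom_mult)
lemma hom_numeral: "hom h \<Longrightarrow> h (numeral n) = numeral n"
proof (induction n)
  case One then show ?case by (simp add: hom_1)
next
  case (Bit0 n) then show ?case using hom_add[of h "numeral n" "numeral n"] by (simp add: numeral_Bit0)
next
  case (Bit1 n) then show ?case using hom_add[of h "numeral n" "numeral n"] hom_add[of h "numeral n + numeral n" 1] hom_1[of h]
    by (simp add: numeral_Bit1)
qed

definition fmap :: "('a::comm_ring_1 \<Rightarrow> 'b::comm_ring_1) \<Rightarrow> 'a fps \<Rightarrow> 'b fps" where
  "fmap h f = Abs_fps (\<lambda>n. h (f $ n))"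

lemma fmap_nth[simp]: "fmap h f $ n = h (f $ n)" by (simp add: fmap_def)

lemma fmap_add: "hom h \<Longrightarrow> fmap h (f + g) = fmap h f + fmap h g"
  by (rule fps_ext) (simp add: hom_add)
lemma fmap_diff: "hom h \<Longrightarrow> fmap h (f - g) = fmap h f - fmap h g"
  by (rule fps_ext) (simp add: hom_diff)
lemma fmap_mult: "hom h \<Longrightarrow> fmap h (f * g) = fmap h f * fmap h g"
  by (rule fps_ext) (simp add: fps_mult_nth hom_sum hom_mult)
lemma fmap_1: "hom h \<Longrightarrow> fmap h 1 = 1"
  by (rule fps_ext) (simp add: hom_1 hom_0)
lemma fmap_0: "hom h \<Longrightarrow> fmap h 0 = 0"
  by (rule fps_ext) (simp add: hom_0)
lemma fmap_X: "hom h \<Longrightarrow> fmap h fps_X = fps_X"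
  by (rule fps_ext) (simp add: hom_1 hom_0 fps_X_def)
lemma fmap_const: "hom h \<Longrightarrow> fmap h (fps_const c) = fps_const (h c)"
  by (rule fps_ext) (simp add: hom_0)
lemma fmap_power: "hom h \<Longrightarrow> fmap h (f ^ n) = fmap h f ^ n"
  by (induction n) (auto simp: fmap_1 fmap_mult)
lemma fmap_sum: "hom h \<Longrightarrow> fmap h (sum f A) = sum (\<lambda>i. fmap h (f i)) A"
  by (induction A rule: infinite_finite_induct) (auto simp: fmap_0 fmap_add)
lemma fmap_prod: "hom h \<Longrightarrow> fmap h (prod f A) = prod (\<lambda>i. fmap h (f i)) A"
  by (induction A rule: infinite_finite_induct) (auto simp: fmap_1 fmap_mult)

lemma hom_poly: "hom (\<lambda>p. poly p c)"
  by (simp add: hom_def)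

lemma hom_fps_of_poly_pcompose: "hom (\<lambda>p. fps_of_poly (pcompose p q))"
  by (simp add: hom_def pcompose_add pcompose_mult pcompose_1 fps_of_poly_add fps_of_poly_mult)


lemma Xpow_add: "a + b = c \<Longrightarrow> fps_X ^ a * fps_X ^ b = (fps_X ^ c :: 'a::comm_ring_1 fps)"
  by (simp only: power_add[symmetric])

definition pp :: "nat \<Rightarrow> 'a::comm_ring_1 fps" where
  "pp n = (\<Prod>k\<in>{1..n}. 1 - fps_X ^ (2*k))"

lemma pp_0[simp]: "pp 0 = 1" by (simp add: pp_def)
lemma pp_Suc: "pp (Suc n) = pp n * (1 - fps_X ^ (2 * Suc n))"
  by (simp add: pp_def prod.nat_ivl_Suc')

lemma pp_nth0: "pp n $ 0 = (1::'a::comm_ring_1)"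
  by (induction n) (simp_all add: pp_Suc)

fun G :: "nat \<Rightarrow> nat \<Rightarrow> 'a::comm_ring_1 fps" where
  "G n 0 = 1"
| "G 0 (Suc k) = 0"
| "G (Suc n) (Suc k) = G n k + fps_X ^ (2 * Suc k) * G n (Suc k)"

lemma G_zero: "n < k \<Longrightarrow> G n k = 0"
proof (induction n arbitrary: k)
  case 0 then show ?case by (cases k) auto
next
  case (Suc n) then show ?case by (cases k) auto
qed

lemma G_prod: "k \<le> n \<Longrightarrow> G n k * pp k * pp (n - k) = pp n"
proof (induction n arbitrary: k)
  case 0 then show ?case by simp
next
  case (Suc n)
  show ?case
  proof (cases k)
    case 0 then show ?thesis by simp
  next
    case (Suc j)
    with Suc.prems have j: "j \<le> n" by simp
    have "(G n j :: 'a fps) * pp (Suc j) * pp (n - j) = (G n j * pp j * pp (n - j)) * (1 - fps_X ^ (2 * Suc j))"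
      by (simp only: pp_Suc ac_simps)
    also have "\<dots> = pp n * (1 - fps_X ^ (2 * Suc j))" by (simp only: Suc.IH[OF j])
    finally have A: "(G n j :: 'a fps) * pp (Suc j) * pp (n - j) = pp n * (1 - fps_X ^ (2 * Suc j))" .
    have B: "fps_X ^ (2 * Suc j) * (G n (Suc j) :: 'a fps) * pp (Suc j) * pp (n - j)
             = fps_X ^ (2 * Suc j) * (pp n * (1 - fps_X ^ (2 * (n - j))))"
    proof (cases "j < n")
      case True
      then have "n - j = Suc (n - Suc j)" by simp
      then have e1: "pp (n - j) = (pp (n - Suc j) * (1 - fps_X ^ (2 * (n - j))) :: 'a fps)"
        by (simp add: pp_Suc)
      have e2: "(G n (Suc j) :: 'a fps) * pp (Suc j) * pp (n - Suc j) = pp n"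
        using Suc.IH[of "Suc j"] True by simp
      have "fps_X ^ (2 * Suc j) * (G n (Suc j) :: 'a fps) * pp (Suc j) * pp (n - j)
        = fps_X ^ (2 * Suc j) * (((G n (Suc j) :: 'a fps) * pp (Suc j) * pp (n - Suc j)) * (1 - fps_X ^ (2 * (n - j))))"
        by (simp only: e1 mult.assoc)
      then show ?thesis by (simp only: e2)
    next
      case False
      then have "n = j" using j by simp
      then show ?thesis by (simp add: G_zero)
    qed
    have "(G (Suc n) k :: 'a fps) * pp k * pp (Suc n - k)
        = G n j * pp (Suc j) * pp (n - j) + fps_X ^ (2 * Suc j) * G n (Suc j) * pp (Suc j) * pp (n - j)"
      using Suc by (simp add: algebra_simps)
    also have "\<dots> = pp n * (1 - fps_X ^ (2 * Suc j)) + fps_X ^ (2 * Suc j) * (pp n * (1 - fps_X ^ (2 * (n - j))))"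
      using A B by simp
    also have "\<dots> = pp n * (1 - fps_X ^ (2 * Suc j) * fps_X ^ (2 * (n - j)))"
      by (simp add: algebra_simps)
    also have "fps_X ^ (2 * Suc j) * fps_X ^ (2 * (n - j)) = (fps_X ^ (2 * Suc n) :: 'a fps)"
      using j by (intro Xpow_add) simp
    finally show ?thesis by (simp add: pp_Suc)
  qed
qed

lemma pp_nonzero: "pp n \<noteq> (0 :: 'a::comm_ring_1 fps)"
proof
  assume "pp n = (0::'a fps)"
  then have "pp n $ 0 = (0::'a)" by simp
  then show False by (simp add: pp_nth0)
qed

lemma G_pascal2:
  "G (Suc n) (Suc k) = fps_X ^ (2 * (n - k)) * G n k + (G n (Suc k) :: 'a::idom fps)"
proof (cases "k \<le> n")
  case False
  then show ?thesis by (simp add: G_zero)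
next
  case True
  have nz: "pp (Suc k) * pp (n - k) \<noteq> (0::'a fps)" by (simp add: pp_nonzero)
  have L: "G (Suc n) (Suc k) * (pp (Suc k) * pp (n - k)) = (pp (Suc n) :: 'a fps)"
    using G_prod[of "Suc k" "Suc n", where 'a='a] True by (simp add: ac_simps)
  have R1: "fps_X ^ (2 * (n - k)) * G n k * (pp (Suc k) * pp (n - k))
            = (fps_X ^ (2 * (n - k)) * (pp n * (1 - fps_X ^ (2 * Suc k))) :: 'a fps)"
    using G_prod[of k n, where 'a='a] True by (simp add: pp_Suc ac_simps)
  have R2: "G n (Suc k) * (pp (Suc k) * pp (n - k)) = (pp n * (1 - fps_X ^ (2 * (n - k))) :: 'a fps)"
  proof (cases "k < n")
    case True
    then have "n - k = Suc (n - Suc k)" by simp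
    then have "pp (n - k) = (pp (n - Suc k) * (1 - fps_X ^ (2 * (n - k))) :: 'a fps)"
      by (simp add: pp_Suc)
    moreover have "G n (Suc k) * pp (Suc k) * pp (n - Suc k) = (pp n :: 'a fps)"
      using G_prod[of "Suc k" n] True by simp
    ultimately show ?thesis by (metis mult.assoc)
  next
    case False
    then show ?thesis using True by (simp add: G_zero)
  qed
  have "(fps_X ^ (2 * (n - k)) * G n k + G n (Suc k)) * (pp (Suc k) * pp (n - k))
        = fps_X ^ (2 * (n - k)) * (pp n * (1 - fps_X ^ (2 * Suc k))) + (pp n * (1 - fps_X ^ (2 * (n - k))) :: 'a fps)"
    using R1 R2 by (simp add: distrib_right)
  also have "\<dots> = pp n * (1 - fps_X ^ (2 * (n - k)) * fps_X ^ (2 * Suc k))"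
    by (simp add: algebra_simps)
  also have "fps_X ^ (2 * (n - k)) * fps_X ^ (2 * Suc k) = (fps_X ^ (2 * Suc n) :: 'a fps)"
    using True by (intro Xpow_add) simp
  finally have "(fps_X ^ (2 * (n - k)) * G n k + G n (Suc k)) * (pp (Suc k) * pp (n - k)) = (pp (Suc n) :: 'a fps)"
    by (simp add: pp_Suc)
  with L nz show ?thesis by (metis mult_right_cancel)
qed

lemma G_double:
  "G (Suc (Suc n)) (Suc (Suc k)) = fps_X ^ (2 * (k+2)) * G n (k+2)
     + (1 + fps_X ^ (2 * (n+1))) * G n (k+1) + fps_X ^ (2 * (n - k)) * (G n k :: 'a::idom fps)"
proof -
  have "G (Suc (Suc n)) (Suc (Suc k)) = G (Suc n) (Suc k) + fps_X ^ (2 * (k+2)) * (G (Suc n) (Suc (Suc k)) :: 'a fps)"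
    by simp
  also have "G (Suc n) (Suc k) = fps_X ^ (2 * (n - k)) * G n k + (G n (Suc k) :: 'a fps)"
    by (rule G_pascal2)
  also have "G (Suc n) (Suc (Suc k)) = fps_X ^ (2 * (n - Suc k)) * G n (Suc k) + (G n (Suc (Suc k)) :: 'a fps)"
    by (rule G_pascal2)
  finally have *: "G (Suc (Suc n)) (Suc (Suc k)) = fps_X ^ (2 * (n - k)) * G n k + (G n (Suc k) :: 'a fps)
     + fps_X ^ (2 * (k+2)) * (fps_X ^ (2 * (n - Suc k)) * G n (Suc k) + G n (Suc (Suc k)))" .
  show ?thesis
  proof (cases "Suc k \<le> n")
    case True
    have "fps_X ^ (2 * (k+2)) * (fps_X ^ (2 * (n - Suc k)) * G n (Suc k)) = fps_X ^ (2 * (n+1)) * (G n (Suc k) :: 'a fps)"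
    proof -
      have e: "2 * (k+2) + 2 * (n - Suc k) = 2 * (n+1)" using True by simp
      show ?thesis by (metis (no_types) mult.assoc power_add e)
    qed
    then show ?thesis unfolding * by (simp add: algebra_simps)
  next
    case False
    then show ?thesis unfolding * by (simp add: G_zero algebra_simps)
  qed
qed

lemma G_n1: "G (Suc (Suc n)) (Suc 0) = fps_X ^ 2 * G n 1 + (1 + fps_X ^ (2 * (n+1))) * (G n 0 :: 'a::idom fps)"
proof -
  have "G (Suc (Suc n)) (Suc 0) = 1 + fps_X ^ 2 * (G (Suc n) (Suc 0) :: 'a fps)" by simp
  also have "G (Suc n) (Suc 0) = fps_X ^ (2 * (n - 0)) * G n 0 + (G n (Suc 0) :: 'a fps)" by (rule G_pascal2)
  finally show ?thesis by (simp add: algebra_simps flip: power_add)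
qed


definition ee :: "nat \<Rightarrow> nat \<Rightarrow> nat" where "ee N i = nat ((int i - int N)^2)"

lemma ee_int: "int (ee N i) = (int i - int N)^2"
  by (simp add: ee_def)

lemma ee_eq_iff: "a + ee N i = b + ee N' i' \<longleftrightarrow> int a + (int i - int N)^2 = int b + (int i' - int N')^2"
proof -
  have "a + ee N i = b + ee N' i' \<longleftrightarrow> int (a + ee N i) = int (b + ee N' i')" by linarith
  also have "\<dots> \<longleftrightarrow> int a + (int i - int N)^2 = int b + (int i' - int N')^2"
    by (simp only: of_nat_add ee_int)
  finally show ?thesis .
qed

lemma Xpow_swap:
  assumes "a + b = c + d"
  shows "fps_X^a * (g * fps_X^b) = fps_X^c * g * (fps_X^d :: 'a::comm_ring_1 fps)"
proof -
  have "fps_X^a * (g * fps_X^b) = g * (fps_X^(a+b) :: 'a fps)" by (simp only: power_add mult_ac)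
  also have "\<dots> = g * fps_X^(c+d)" by (simp only: assms)
  also have "\<dots> = fps_X^c * g * fps_X^d" by (simp only: power_add mult_ac)
  finally show ?thesis .
qed

definition JP :: "nat \<Rightarrow> 'a::comm_ring_1 fps poly" where
  "JP N = (\<Prod>k\<in>{1..N}. [: fps_X^(2*k-1), 1 + fps_X^(2*(2*k-1)), fps_X^(2*k-1) :])"

lemma coeff_mult_3:
  fixes p :: "'a::comm_ring_1 poly"
  shows "coeff (p * [:a,b,c:]) i = a * coeff p i + (if i \<ge> 1 then b * coeff p (i-1) else 0)
          + (if i \<ge> 2 then c * coeff p (i-2) else 0)"
proof -
  have "p * [:a,b,c:] = smult a p + pCons 0 (smult b p + pCons 0 (smult c p))"
    by simp
  then show ?thesis
    by (cases i; cases "i - 1") (auto simp: coeff_pCons' mult.commute)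
qed

lemma JP_coeff: "coeff (JP N) i = G (2*N) i * fps_X ^ (ee N i :: nat) * (1 :: 'a::idom fps)"
proof (induction N arbitrary: i)
  case 0
  then show ?case by (cases i) (auto simp: JP_def ee_def coeff_1)
next
  case (Suc N)
  let ?a = "fps_X ^ (2 * N + 1) :: 'a fps"
  let ?b = "1 + fps_X ^ (2 * (2 * N + 1)) :: 'a fps"
  have JPS: "JP (Suc N) = JP N * [: ?a, ?b, ?a :]"
    by (simp add: JP_def prod.nat_ivl_Suc')
  have IH: "\<And>i. coeff (JP N) i = (G (2*N) i :: 'a fps) * fps_X ^ ee N i"
    using Suc.IH by simp
  show ?case
  proof (cases i)
    case 0
    have e0: "2 * N + 1 + ee N 0 = 0 + ee (Suc N) 0" by (subst ee_eq_iff) (simp add: algebra_simps power2_eq_square)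
    then have e: "2 * N + 1 + ee N 0 = ee (Suc N) 0 + 0" by simp
    have "coeff (JP (Suc N)) i = ?a * (1 * fps_X ^ ee N 0)" unfolding JPS coeff_mult_3 using 0 by (simp add: IH)
    also have "\<dots> = fps_X ^ ee (Suc N) 0 * 1 * fps_X ^ 0" by (rule Xpow_swap[OF e])
    finally show ?thesis using 0 by simp
  next
    case (Suc j)
    show ?thesis
    proof (cases j)
      case 0
      have e1: "2 * N + 1 + ee N 1 = 2 + ee (Suc N) 1" by (subst ee_eq_iff) (simp add: algebra_simps power2_eq_square)
      have e2: "ee N 0 = ee (Suc N) 1" by (simp add: ee_def)
      have "coeff (JP (Suc N)) i = ?a * (G (2*N) 1 * fps_X ^ ee N 1) + ?b * (G (2*N) 0 * fps_X ^ ee N 0)"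
        unfolding JPS coeff_mult_3 using Suc 0 by (simp add: IH)
      also have "\<dots> = fps_X ^ 2 * G (2*N) 1 * fps_X ^ ee (Suc N) 1 + ?b * G (2*N) 0 * fps_X ^ ee (Suc N) 1"
        by (simp only: Xpow_swap[OF e1] e2 mult.assoc)
      also have "\<dots> = (fps_X ^ 2 * G (2*N) 1 + ?b * G (2*N) 0) * fps_X ^ ee (Suc N) 1"
        by (simp only: distrib_right)
      also have "fps_X ^ 2 * G (2*N) 1 + ?b * G (2*N) 0 = G (2 * Suc N) i"
        using G_n1[of "2*N", where 'a='a] Suc 0 by (simp add: numeral_2_eq_2)
      finally show ?thesis using Suc 0 by simp
    next
      case (Suc k)
      then have ik: "i = Suc (Suc k)" using \<open>i = Suc j\<close> by simp
      have e1: "2 * N + 1 + ee N (k+2) = 2 * (k+2) + ee (Suc N) (k+2)"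
        by (subst ee_eq_iff) (simp add: algebra_simps power2_eq_square)
      have e2: "ee N (k+1) = ee (Suc N) (k+2)" by (simp add: ee_def algebra_simps)
      have t3: "?a * (G (2*N) k * fps_X ^ ee N k) = fps_X ^ (2 * (2*N - k)) * G (2*N) k * fps_X ^ ee (Suc N) (k+2)"
      proof (cases "k \<le> 2*N")
        case True
        have e3: "2 * N + 1 + ee N k = 2 * (2*N - k) + ee (Suc N) (k+2)"
          using True by (subst ee_eq_iff) (simp add: algebra_simps power2_eq_square of_nat_diff)
        show ?thesis by (rule Xpow_swap[OF e3])
      next
        case False
        then show ?thesis by (simp add: G_zero)
      qed
      have t1: "?a * (G (2*N) (k+2) * fps_X ^ ee N (k+2)) = fps_X ^ (2 * (k+2)) * G (2*N) (k+2) * fps_X ^ ee (Suc N) (k+2)"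
        by (rule Xpow_swap[OF e1])
      have "coeff (JP (Suc N)) i = ?a * (G (2*N) (k+2) * fps_X ^ ee N (k+2)) + ?b * (G (2*N) (k+1) * fps_X ^ ee N (k+1))
          + ?a * (G (2*N) k * fps_X ^ ee N k)"
        unfolding JPS coeff_mult_3 using ik by (simp add: IH numeral_2_eq_2)
      also have "\<dots> = (fps_X ^ (2 * (k+2)) * G (2*N) (k+2) + ?b * G (2*N) (k+1) + fps_X ^ (2 * (2*N - k)) * G (2*N) k)
                     * fps_X ^ ee (Suc N) (k+2)"
        unfolding t1 t3 e2 by (simp only: distrib_right mult.assoc)
      also have "fps_X ^ (2 * (k+2)) * G (2*N) (k+2) + ?b * G (2*N) (k+1) + fps_X ^ (2 * (2*N - k)) * G (2*N) k
          = G (2 * Suc N) i"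
        using G_double[of "2*N" k, where 'a='a] ik by (simp add: algebra_simps)
      finally show ?thesis using ik by simp
    qed
  qed
qed


lemma pp_eqv: "eqv (2*j+2) (pp (j + d)) (pp j :: 'a::comm_ring_1 fps)"
proof (induction d)
  case 0 then show ?case by simp
next
  case (Suc d)
  have "eqv (2*j+2) (pp (j + d) * (1 - fps_X ^ (2 * Suc (j+d)))) (pp j * (1::'a fps))"
    using eqv_mult[OF Suc eqv_one_minus_Xpow[of "2*j+2" "2 * Suc (j+d)"]] by simp
  then show ?case by (simp add: pp_Suc)
qed

lemma pp_eqv': "j \<le> n \<Longrightarrow> eqv (2*j+2) (pp n) (pp j)"
  using pp_eqv[of j "n - j"] by simp

lemma pp_inv: "pp n * inverse (pp n) = (1 :: 'a::field fps)"
  by (rule inverse_mult_eq_1') (simp add: pp_nth0)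

lemma G_pp_eqv:
  assumes "k \<le> n" "min k (n - k) \<le> N"
  shows "eqv (2 * min k (n - k) + 2) (G n k * pp N) (1 :: 'a::field fps)"
proof -
  define j where "j = min k (n - k)"
  have jk: "j \<le> k" "j \<le> n - k" "j \<le> n" "j \<le> N" using assms by (auto simp: j_def)
  have "eqv (2*j+2) (G n k * pp k * pp (n - k)) (G n k * pp j * pp j :: 'a fps)"
    by (intro eqv_mult eqv_refl pp_eqv' jk)
  then have "eqv (2*j+2) (pp n) (G n k * pp j * pp j :: 'a fps)"
    unfolding G_prod[OF assms(1)] .
  then have "eqv (2*j+2) (G n k * pp j * pp j) (1 * pp j :: 'a fps)"
    using pp_eqv'[OF jk(3)] by (auto intro: eqv_trans eqv_sym)
  then have "eqv (2*j+2) (G n k * pp j) (1 :: 'a fps)"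
    by (rule eqv_cancel_inv[OF _ pp_inv])
  moreover have "eqv (2*j+2) (G n k * pp N) (G n k * pp j :: 'a fps)"
    by (intro eqv_mult eqv_refl pp_eqv' jk)
  ultimately show ?thesis unfolding j_def[symmetric] by (blast intro: eqv_trans)
qed

lemma ee_bound:
  assumes "i \<le> 2*N" "m \<le> N"
  shows "m - ee N i < 2 * min i (2*N - i) + 2"
proof (cases "i \<le> N")
  case True
  define s where "s = N - i"
  have si: "int s = int N - int i" using True by (simp add: s_def)
  have "(int i - int N)^2 = int (s * s)" by (simp only: of_nat_mult si) (simp add: power2_eq_square algebra_simps)
  then have ee: "ee N i = s * s" unfolding ee_def by (simp only: nat_int)
  have mi: "min i (2*N - i) = i" using True by simp
  have "int (s * s) + 1 \<ge> 2 * int s"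
    using zero_le_power2[of "int s - 1"] by (simp add: power2_eq_square algebra_simps)
  then show ?thesis unfolding ee mi using assms s_def True by linarith
next
  case False
  define s where "s = i - N"
  have si: "int s = int i - int N" using False by (simp add: s_def)
  have "(int i - int N)^2 = int (s * s)" by (simp only: of_nat_mult si) (simp add: power2_eq_square algebra_simps)
  then have ee: "ee N i = s * s" unfolding ee_def by (simp only: nat_int)
  have mi: "min i (2*N - i) = 2*N - i" using False assms by simp
  have "int (s * s) + 1 \<ge> 2 * int s"
    using zero_le_power2[of "int s - 1"] by (simp add: power2_eq_square algebra_simps)
  then show ?thesis unfolding ee mi using assms s_def False by linarith
qed

lemma coeff_G_pp_X:
  assumes "i \<le> 2*N" "m \<le> N"
  shows "(G (2*N) i * pp N * fps_X ^ ee N i) $ m = (fps_X ^ ee N i :: 'a::field fps) $ m"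
proof -
  have E: "eqv (2 * min i (2*N - i) + 2) (G (2*N) i * pp N) (1 :: 'a fps)"
    by (rule G_pp_eqv) (use assms in auto)
  show ?thesis
  proof (cases "m < ee N i")
    case True then show ?thesis by (simp add: fps_X_power_mult_right_nth)
  next
    case False
    have "(G (2*N) i * pp N) $ (m - ee N i) = (1::'a fps) $ (m - ee N i)"
      using E ee_bound[OF assms] unfolding eqv_def by blast
    then show ?thesis using False by (simp add: fps_X_power_mult_right_nth)
  qed
qed

fun V :: "nat \<Rightarrow> 'a::comm_ring_1 \<Rightarrow> 'a" where
  "V 0 c = 2"
| "V (Suc 0) c = c"
| "V (Suc (Suc n)) c = c * V (Suc n) c - V n c"

lemma V_real:
  assumes z: "(z::'a::field) \<noteq> 0"
  shows "V n (z + inverse z) = z ^ n + inverse z ^ n"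
proof (induction n rule: nat_less_induct)
  case (1 n)
  show ?case
  proof (cases n)
    case 0 then show ?thesis by simp
  next
    case (Suc k)
    show ?thesis
    proof (cases k)
      case 0 then show ?thesis using Suc by simp
    next
      case (Suc j)
      have I1: "V (Suc j) (z + inverse z) = z ^ Suc j + inverse z ^ Suc j"
        using 1 \<open>n = Suc k\<close> Suc by simp
      have I2: "V j (z + inverse z) = z ^ j + inverse z ^ j"
        using 1 \<open>n = Suc k\<close> Suc by simp
      have a: "z * inverse z ^ Suc j = inverse z ^ j" using z by (simp add: mult.assoc[symmetric])
      have b: "inverse z * z ^ Suc j = z ^ j" using z by (simp add: mult.assoc[symmetric])
      have "V n (z + inverse z) = (z + inverse z) * (z ^ Suc j + inverse z ^ Suc j) - (z ^ j + inverse z ^ j)"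
        using \<open>n = Suc k\<close> Suc I1 I2 by simp
      also have "\<dots> = z * z ^ Suc j + inverse z * inverse z ^ Suc j + (z * inverse z ^ Suc j + inverse z * z ^ Suc j) - (z ^ j + inverse z ^ j)"
        by (simp only: distrib_left distrib_right add_ac)
      also have "\<dots> = z ^ n + inverse z ^ n" unfolding a b using \<open>n = Suc k\<close> Suc by simp
      finally show ?thesis .
    qed
  qed
qed

lemma V_hom: "hom h \<Longrightarrow> h (V n c) = V n (h c)"
  by (induction n c rule: V.induct) (auto simp: hom_numeral hom_diff hom_mult)

definition LHSN :: "nat \<Rightarrow> 'a::comm_ring_1 \<Rightarrow> 'a fps" where
  "LHSN N c = (\<Prod>k\<in>{1..N}. 1 + fps_const c * fps_X^(2*k-1) + fps_X^(2*(2*k-1))) * pp N"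

definition RHSN :: "nat \<Rightarrow> 'a::comm_ring_1 \<Rightarrow> 'a fps" where
  "RHSN N c = 1 + (\<Sum>n\<in>{1..N}. fps_const (V n c) * fps_X^(n^2))"

lemma fmap_pp: "hom h \<Longrightarrow> fmap h (pp N) = pp N"
  by (simp add: pp_def fmap_prod fmap_diff fmap_1 fmap_power fmap_X)

lemma fmap_LHSN: "hom h \<Longrightarrow> fmap h (LHSN N c) = LHSN N (h c)"
  by (simp add: LHSN_def fmap_mult fmap_prod fmap_add fmap_1 fmap_power fmap_X fmap_const fmap_pp)

lemma fmap_RHSN: "hom h \<Longrightarrow> fmap h (RHSN N c) = RHSN N (h c)"
  by (simp add: RHSN_def fmap_mult fmap_sum fmap_add fmap_1 fmap_power fmap_X fmap_const V_hom)

lemma JP_degree: "degree (JP N :: 'a::idom fps poly) \<le> 2*N"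
  by (rule degree_le) (auto simp: JP_coeff G_zero)

lemma poly_sum_le: fixes p :: "'a::comm_ring_1 poly" assumes "degree p \<le> n" shows "poly p x = (\<Sum>i\<le>n. coeff p i * x ^ i)"
  unfolding poly_altdef
  by (rule sum.mono_neutral_left) (use assms in \<open>auto simp: coeff_eq_0\<close>)

lemma sum_split_mid:
  fixes h :: "nat \<Rightarrow> 'a::comm_monoid_add"
  shows "(\<Sum>i\<le>2*N. h i) = h N + (\<Sum>n\<in>{1..N}. h (N + n)) + (\<Sum>n\<in>{1..N}. h (N - n))"
proof -
  have U: "{..2*N} = {..<N} \<union> ({N} \<union> {N<..2*N})" by auto
  have "(\<Sum>i\<le>2*N. h i) = (\<Sum>i<N. h i) + (h N + (\<Sum>i\<in>{N<..2*N}. h i))"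
    unfolding U by (subst sum.union_disjoint; auto)+
  moreover have "(\<Sum>n\<in>{1..N}. h (N + n)) = (\<Sum>i\<in>{N<..2*N}. h i)"
    by (rule sum.reindex_bij_witness[of _ "\<lambda>i. i - N" "\<lambda>n. N + n"]) auto
  moreover have "(\<Sum>n\<in>{1..N}. h (N - n)) = (\<Sum>i<N. h i)"
    by (rule sum.reindex_bij_witness[of _ "\<lambda>i. N - i" "\<lambda>n. N - n"]) auto
  ultimately show ?thesis by (simp add: ac_simps)
qed


lemma real_case:
  fixes z :: "'a::field"
  assumes z: "z \<noteq> 0" and m: "m \<le> N"
  shows "LHSN N (z + inverse z) $ m = RHSN N (z + inverse z) $ m"
proof -
  define c where "c = z + inverse z"
  let ?w = "fps_const z :: 'a fps"
  have zc: "z * c = z * z + 1" using z by (simp add: c_def distrib_left)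
  have fac: "poly [: fps_X^(2*k-1), 1 + fps_X^(2*(2*k-1)), fps_X^(2*k-1) :] ?w
        = ?w * (1 + fps_const c * fps_X^(2*k-1) + fps_X^(2*(2*k-1)))" for k
  proof -
    have wc: "?w * fps_const c = ?w * ?w + 1"
    proof -
      have "?w * fps_const c = fps_const (z * c)" by simp
      also have "\<dots> = fps_const (z * z + 1)" by (simp only: zc)
      also have "\<dots> = ?w * ?w + 1" by simp
      finally show ?thesis .
    qed
    have "poly [: fps_X^(2*k-1), 1 + fps_X^(2*(2*k-1)), fps_X^(2*k-1) :] ?w
        = fps_X^(2*k-1) + ?w * (1 + fps_X^(2*(2*k-1))) + (?w * ?w) * fps_X^(2*k-1)"
      by (simp add: algebra_simps)
    also have "\<dots> = ?w + ?w * fps_X^(2*(2*k-1)) + (?w * fps_const c) * fps_X^(2*k-1)"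
      unfolding wc by (simp add: algebra_simps)
    also have "\<dots> = ?w * (1 + fps_const c * fps_X^(2*k-1) + fps_X^(2*(2*k-1)))"
      by (simp add: algebra_simps)
    finally show ?thesis .
  qed
  have P1: "poly (JP N) ?w = fps_const (z ^ N) * (\<Prod>k\<in>{1..N}. 1 + fps_const c * fps_X^(2*k-1) + fps_X^(2*(2*k-1)))"
    unfolding JP_def poly_prod fac by (simp add: prod.distrib)
  have P2: "poly (JP N) ?w = (\<Sum>i\<le>2*N. G (2*N) i * fps_X ^ ee N i * fps_const (z ^ i))"
    by (subst poly_sum_le[OF JP_degree]) (simp add: JP_coeff)
  have L: "fps_const (z ^ N) * LHSN N c = (\<Sum>i\<le>2*N. G (2*N) i * pp N * fps_X ^ ee N i * fps_const (z ^ i))"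
    unfolding LHSN_def mult.assoc[symmetric] P1[symmetric] P2 sum_distrib_right
    by (rule sum.cong) (simp_all add: ac_simps)
  have Lm: "z ^ N * LHSN N c $ m = (\<Sum>i\<le>2*N. z ^ i * (fps_X ^ ee N i :: 'a fps) $ m)"
  proof -
    have "z ^ N * LHSN N c $ m = (fps_const (z ^ N) * LHSN N c) $ m" by simp
    also have "\<dots> = (\<Sum>i\<le>2*N. (G (2*N) i * pp N * fps_X ^ ee N i) $ m * z ^ i)"
      unfolding L fps_sum_nth by simp
    also have "\<dots> = (\<Sum>i\<le>2*N. z ^ i * (fps_X ^ ee N i :: 'a fps) $ m)"
      by (rule sum.cong) (simp_all add: coeff_G_pp_X m)
    finally show ?thesis .
  qed
  have Rm: "z ^ N * RHSN N c $ m = (\<Sum>i\<le>2*N. z ^ i * (fps_X ^ ee N i :: 'a fps) $ m)"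
  proof -
    have a: "ee N (N + n) = n^2" for n by (simp add: ee_def nat_power_eq)
    have b: "n \<le> N \<Longrightarrow> ee N (N - n) = n^2" for n by (simp add: ee_def of_nat_diff power2_commute nat_power_eq)
    have ee_NN: "ee N N = 0" by (simp add: ee_def)
    have V: "z ^ N * V n c = z^(N+n) + z^(N-n)" if "n \<in> {1..N}" for n
    proof -
      have "z ^ N * inverse z ^ n = z^(N-n)"
        using that z by (simp add: power_diff power_inverse divide_inverse)
      then show ?thesis using z by (simp add: c_def V_real power_add distrib_left)
    qed
    have "z ^ N * RHSN N c $ m = z ^ N * (1::'a fps) $ m + (\<Sum>n\<in>{1..N}. z ^ N * V n c * (fps_X^(n^2) :: 'a fps) $ m)"
      unfolding RHSN_def by (simp add: fps_sum_nth sum_distrib_left distrib_left mult.assoc)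
    also have "\<dots> = z ^ N * (1::'a fps) $ m + (\<Sum>n\<in>{1..N}. z^(N+n) * (fps_X^(n^2) :: 'a fps) $ m)
          + (\<Sum>n\<in>{1..N}. z^(N-n) * (fps_X^(n^2) :: 'a fps) $ m)"
    proof -
      have "(\<Sum>n\<in>{1..N}. z ^ N * V n c * (fps_X^(n^2) :: 'a fps) $ m)
          = (\<Sum>n\<in>{1..N}. z^(N+n) * (fps_X^(n^2) :: 'a fps) $ m + z^(N-n) * (fps_X^(n^2) :: 'a fps) $ m)"
        by (rule sum.cong) (simp_all only: V distrib_right)
      then show ?thesis by (simp only: sum.distrib add.assoc)
    qed
    also have "\<dots> = (\<Sum>i\<le>2*N. z ^ i * (fps_X ^ ee N i :: 'a fps) $ m)"
      unfolding sum_split_mid by (simp add: a ee_NN) (rule sum.cong, simp_all add: b)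
    finally show ?thesis .
  qed
  have "z ^ N * LHSN N c $ m = z ^ N * RHSN N c $ m" using Lm Rm by simp
  then show ?thesis unfolding c_def[symmetric] using z by simp
qed


lemma inj_zinv: "inj_on (\<lambda>z::real. z + inverse z) {1<..}"
proof (rule inj_onI)
  fix z w :: real assume zw: "z \<in> {1<..}" "w \<in> {1<..}" "z + inverse z = w + inverse w"
  then have pos: "z > 1" "w > 1" by auto
  have e1: "(z + inverse z) * (z * w) = z * z * w + w" using pos by (simp add: field_simps)
  have e2: "(w + inverse w) * (z * w) = w * w * z + z" using pos by (simp add: field_simps)
  have "z * z * w + w = w * w * z + z" using zw(3) e1 e2 by simp
  then have "(z - w) * (z * w - 1) = 0" by (simp add: algebra_simps)
  moreover have "z * w - 1 \<noteq> 0" using pos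
    by (metis less_numeral_extra(4) mult_less_cancel_right2 order_less_trans less_eq_real_def
        right_minus_eq zero_less_one)
  ultimately show "z = w" by simp
qed

lemma fmap_poly_nth: "fmap (\<lambda>p. poly p c) F $ m = poly (F $ m) c"
  by simp

lemma generic_case:
  fixes h :: "real poly \<Rightarrow> 'b::comm_ring_1"
  assumes h: "hom h" and m: "m \<le> N"
  shows "LHSN N (h [:0,1:]) $ m = RHSN N (h [:0,1:]) $ m"
proof -
  define D where "D = LHSN N ([:0,1:] :: real poly) $ m - RHSN N [:0,1:] $ m"
  have ev: "poly D c = LHSN N c $ m - RHSN N c $ m" for c :: real
  proof -
    have "LHSN N c = fmap (\<lambda>p. poly p c) (LHSN N ([:0,1:] :: real poly))"
      using fmap_LHSN[OF hom_poly[of c], of N "[:0,1:]"] by simp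
    then have "LHSN N c $ m = poly (LHSN N ([:0,1:] :: real poly) $ m) c" by simp
    moreover have "RHSN N c = fmap (\<lambda>p. poly p c) (RHSN N ([:0,1:] :: real poly))"
      using fmap_RHSN[OF hom_poly[of c], of N "[:0,1:]"] by simp
    then have "RHSN N c $ m = poly (RHSN N ([:0,1:] :: real poly) $ m) c" by simp
    ultimately show ?thesis by (simp add: D_def)
  qed
  have "(\<lambda>z::real. z + inverse z) ` {1<..} \<subseteq> {c. poly D c = 0}"
    using real_case[OF _ m, where 'a=real] ev by force
  moreover have "infinite ((\<lambda>z::real. z + inverse z) ` {1<..})"
    using finite_imageD[OF _ inj_zinv] infinite_Ioi by blast
  ultimately have "infinite {c. poly D c = 0}" using finite_subset by blast
  then have D0: "D = 0" using poly_roots_finite by blast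
  have "LHSN N (h [:0,1:]) $ m = h (LHSN N ([:0,1:] :: real poly) $ m)"
    using fmap_LHSN[OF h] by (metis fmap_nth)
  also have "\<dots> = h (RHSN N ([:0,1:] :: real poly) $ m)" using D0 by (simp add: D_def)
  also have "\<dots> = RHSN N (h [:0,1:]) $ m"
    using fmap_RHSN[OF h] by (metis fmap_nth)
  finally show ?thesis .
qed


fun E :: "nat \<Rightarrow> real poly" where
  "E 0 = 1"
| "E (Suc 0) = [:-1, 2:]"
| "E (Suc (Suc n)) = [:-2, 4:] * E (Suc n) - E n"

lemma cheb4: "cheb (Suc (Suc (Suc (Suc m)))) = [:-2, 0, 4:] * cheb (Suc (Suc m)) - cheb m"
proof -
  let ?Y = "smult 2 [:0, 1:] :: real poly"
  have YY: "?Y * ?Y = [:0, 0, 4:]" by simp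
  have a: "cheb (Suc (Suc (Suc (Suc m)))) = ?Y * cheb (Suc (Suc (Suc m))) - cheb (Suc (Suc m))" by simp
  have b: "cheb (Suc (Suc (Suc m))) = ?Y * cheb (Suc (Suc m)) - cheb (Suc m)" by simp
  have c: "cheb (Suc (Suc m)) = ?Y * cheb (Suc m) - cheb m" by simp
  have "cheb (Suc (Suc (Suc (Suc m)))) = (?Y * ?Y) * cheb (Suc (Suc m)) - (?Y * cheb (Suc m)) - cheb (Suc (Suc m))"
    unfolding a b by (simp add: algebra_simps)
  also have "?Y * cheb (Suc m) = cheb (Suc (Suc m)) + cheb m" using c by simp
  finally have "cheb (Suc (Suc (Suc (Suc m)))) = (?Y * ?Y) * cheb (Suc (Suc m)) - 2 * cheb (Suc (Suc m)) - cheb m"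
    by (simp add: algebra_simps)
  also have "\<dots> = ((?Y * ?Y) - 2) * cheb (Suc (Suc m)) - cheb m" by (simp add: algebra_simps)
  also have "(?Y * ?Y) - 2 = [:-2, 0, 4:]" unfolding YY by (simp add: numeral_poly)
  finally show ?thesis .
qed

lemma E_sq: "pcompose (E n) [:0, 0, 1:] = cheb (2 * n)"
proof (induction n rule: E.induct)
  case 1 then show ?case by (simp add: pcompose_1)
next
  case 2 then show ?case by (simp add: pcompose_pCons numeral_2_eq_2 one_pCons)
next
  case (3 n)
  have pc: "pcompose [:-2,4:] [:0,0,1:] = ([:-2,0,4:] :: real poly)" by (simp add: pcompose_pCons)
  have "pcompose (E (Suc (Suc n))) [:0, 0, 1:]
      = pcompose [:-2,4:] [:0,0,1:] * pcompose (E (Suc n)) [:0,0,1:] - pcompose (E n) [:0,0,1:]"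
    by (simp only: E.simps pcompose_diff pcompose_mult)
  also have "\<dots> = [:-2, 0, 4:] * cheb (2 * Suc n) - cheb (2 * n)"
    unfolding pc 3 by simp
  also have "\<dots> = cheb (2 * Suc (Suc n))"
    using cheb4[of "2*n"] by (simp add: numeral_2_eq_2)
  finally show ?case .
qed

lemma coeff_sq: "coeff (pcompose p [:0, 0, 1:]) j = (if even j then coeff p (j div 2) else (0::'a::comm_ring_1))"
proof (induction p arbitrary: j)
  case 0 then show ?case by simp
next
  case (pCons a p)
  have "pcompose (pCons a p) [:0, 0, 1:] = pCons a (pCons 0 (pcompose p [:0, 0, 1:]))"
    by (simp add: pcompose_pCons)
  then show ?case using pCons.IH
    by (cases j; cases "j - 1") (auto simp: coeff_pCons')
qed

lemma E_degree: "degree (E n) \<le> n"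
proof (induction n rule: E.induct)
  case 1 then show ?case by simp
next
  case 2 then show ?case by simp
next
  case (3 n)
  have "degree ([:-2, 4:] * E (Suc n)) \<le> Suc (Suc n)"
    using degree_mult_le[of "[:-2, 4:]" "E (Suc n)"] 3 by simp
  moreover have "degree (E n) \<le> Suc (Suc n)" using 3 by simp
  ultimately show ?case by (simp add: degree_diff_le)
qed

lemma te_E: "te n = E n"
proof (rule poly_eqI)
  fix k
  show "coeff (te n) k = coeff (E n) k"
  proof (cases "k \<le> n")
    case True
    have "coeff (te n) k = coeff (cheb (2 * n)) (2 * k)"
      unfolding te_def coeff_Poly_eq using True by (simp add: nth_default_def del: upt_Suc)
    also have "\<dots> = coeff (E n) k" unfolding E_sq[symmetric] coeff_sq by simp
    finally show ?thesis .
  next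
    case False
    then show ?thesis unfolding te_def coeff_Poly_eq using E_degree[of n]
      by (simp add: nth_default_def coeff_eq_0 del: upt_Suc)
  qed
qed

lemma E_V: "smult 2 (E n) = V n [:-2, 4:]"
proof (induction n rule: E.induct)
  case 1 then show ?case by (simp add: numeral_poly)
next
  case 2 then show ?case by simp
next
  case (3 n)
  have "smult 2 (E (Suc (Suc n))) = [:-2,4:] * smult 2 (E (Suc n)) - smult 2 (E n)"
    by (simp add: smult_diff_right mult_smult_right)
  then show ?case using 3 by simp
qed


lemma sum_vanish:
  assumes "finite Y" "F \<subseteq> Y" "\<forall>x\<in>Y-F. f x $ k = 0"
  shows "sum f Y $ k = sum f F $ k"
  unfolding fps_sum_nth
  by (rule sum.mono_neutral_right) (use assms in auto)

lemma fps_summable_coeffwise: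
  fixes f :: "'b \<Rightarrow> 'a::comm_ring_1 fps"
  assumes "\<And>m. \<exists>F. finite F \<and> F \<subseteq> A \<and> (\<forall>x\<in>A-F. f x $ m = 0)"
  shows "f summable_on A"
proof -
  define Fm where "Fm m = (SOME F. finite F \<and> F \<subseteq> A \<and> (\<forall>x\<in>A-F. f x $ m = 0))" for m
  have Fm: "finite (Fm m) \<and> Fm m \<subseteq> A \<and> (\<forall>x\<in>A-Fm m. f x $ m = 0)" for m
    unfolding Fm_def by (rule someI_ex) (rule assms)
  define s where "s = Abs_fps (\<lambda>m. sum f (Fm m) $ m)"
  have "(f has_sum s) A"
    unfolding has_sum_def
  proof (rule tendsto_fpsI)
    fix n
    show "eventually (\<lambda>G. sum f G $ n = s $ n) (finite_subsets_at_top A)"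
      unfolding eventually_finite_subsets_at_top
    proof (intro exI[of _ "Fm n"] conjI allI impI)
      fix Y assume Y: "finite Y \<and> Fm n \<subseteq> Y \<and> Y \<subseteq> A"
      have "sum f Y $ n = sum f (Fm n) $ n" by (rule sum_vanish) (use Y Fm[of n] in auto)
      then show "sum f Y $ n = s $ n" by (simp add: s_def)
    qed (use Fm in auto)
  qed
  then show ?thesis unfolding summable_on_def by blast
qed

lemma infsum_fps_coeff:
  fixes f :: "'b \<Rightarrow> 'a::comm_ring_1 fps"
  assumes "f summable_on A" "finite F" "F \<subseteq> A" "\<forall>x\<in>A-F. f x $ k = 0"
  shows "infsum f A $ k = sum f F $ k"
proof -
  have "(sum f \<longlongrightarrow> infsum f A) (finite_subsets_at_top A)"
    using has_sum_infsum[OF assms(1)] unfolding has_sum_def .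
  then have "eventually (\<lambda>G. sum f G $ k = infsum f A $ k) (finite_subsets_at_top A)"
    unfolding tendsto_fps_iff by blast
  then obtain X where X: "finite X" "X \<subseteq> A" "\<And>Y. finite Y \<and> X \<subseteq> Y \<and> Y \<subseteq> A \<Longrightarrow> sum f Y $ k = infsum f A $ k"
    unfolding eventually_finite_subsets_at_top by blast
  have "infsum f A $ k = sum f (X \<union> F) $ k" using X assms by (intro X(3)[symmetric]) auto
  also have "\<dots> = sum f F $ k" using X assms by (intro sum_vanish) auto
  finally show ?thesis .
qed

lemma lim_fps_coeff:
  fixes P :: "nat \<Rightarrow> 'a::comm_ring_1 fps"
  assumes "\<And>m. \<exists>N0. \<forall>N\<ge>N0. P N $ m = P N0 $ m"
  shows "\<exists>N0. \<forall>N\<ge>N0. lim P $ m = P N $ m"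
proof -
  have "\<forall>m. \<exists>N0. \<forall>N\<ge>N0. P N $ m = P N0 $ m" using assms by blast
  then obtain N0 where N0: "\<And>m N. N \<ge> N0 m \<Longrightarrow> P N $ m = P (N0 m) $ m"
    by (metis (no_types))
  define L where "L = Abs_fps (\<lambda>m. P (N0 m) $ m)"
  have Ln: "L $ n = P (N0 n) $ n" for n by (simp add: L_def)
  have "P \<longlonglongrightarrow> L"
  proof (rule tendsto_fpsI)
    fix n
    have "\<forall>N\<ge>N0 n. P N $ n = L $ n"
    proof (intro allI impI)
      fix N assume "N \<ge> N0 n"
      then show "P N $ n = L $ n" unfolding Ln by (rule N0)
    qed
    then show "eventually (\<lambda>N. P N $ n = L $ n) sequentially"
      unfolding eventually_sequentially by blast
  qed
  then have lP: "lim P = L" by (rule limI)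
  have "\<forall>N\<ge>N0 m. lim P $ m = P N $ m"
  proof (intro allI impI)
    fix N assume "N \<ge> N0 m"
    then show "lim P $ m = P N $ m" unfolding lP Ln by (rule N0[symmetric])
  qed
  then show ?thesis by blast
qed

lemma prod_stable:
  fixes g :: "nat \<Rightarrow> 'a::comm_ring_1 fps"
  assumes g: "\<And>n. n \<ge> 1 \<Longrightarrow> eqv (2*n - 1) (g n) 1" and M: "M \<le> 2*N0 + 1" and N: "N0 \<le> N"
  shows "eqv M (\<Prod>n\<in>{1..N}. g n) (\<Prod>n\<in>{1..N0}. g n)"
  using N
proof (induction N rule: dec_induct)
  case base then show ?case by simp
next
  case (step N)
  have "eqv (2 * Suc N - 1) (g (Suc N)) 1" by (rule g) simp
  then have "eqv M (g (Suc N)) 1" by (rule eqv_mono) (use M step in simp)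
  then have "eqv M ((\<Prod>n\<in>{1..N}. g n) * g (Suc N)) ((\<Prod>n\<in>{1..N0}. g n) * 1)"
    using step.IH eqv_mult by blast
  then show ?case by (simp add: prod.nat_ivl_Suc')
qed

lemma eqv_coeff: "eqv (Suc m) f g \<Longrightarrow> f $ m = g $ m"
  by (simp add: eqv_def)


lemma pm1: "poly (map_poly (\<lambda>c. fps_const (fps_const c)) p) (fps_const w) = fps_const (poly (map_poly fps_const p) (w :: real fps))"
proof (induction p)
  case 0 then show ?case by simp
next
  case (pCons a p)
  have "map_poly (\<lambda>c. fps_const (fps_const c)) (pCons a p) = pCons (fps_const (fps_const a)) (map_poly (\<lambda>c. fps_const (fps_const c)) p)"
    by (rule map_poly_pCons) simp
  moreover have "map_poly fps_const (pCons a p) = pCons (fps_const a) (map_poly fps_const p)"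
    by (rule map_poly_pCons) simp
  ultimately show ?case using pCons.IH by (simp only: poly_pCons fps_const_add fps_const_mult)
qed

lemma pm2: "poly (map_poly fps_const p) (fps_of_poly q) = fps_of_poly (pcompose p (q :: real poly))"
proof (induction p)
  case 0 then show ?case by simp
next
  case (pCons a p)
  have "map_poly fps_const (pCons a p) = pCons (fps_const a) (map_poly fps_const p)"
    by (rule map_poly_pCons) simp
  then show ?case using pCons.IH
    by (simp only: poly_pCons pcompose_pCons fps_of_poly_add fps_of_poly_mult fps_of_poly_const)
qed

lemma te_val:
  fixes a :: int
  shows "2 * poly (map_poly (\<lambda>c. fps_const (fps_const c)) (te n))
            ((fps_const fps_X + of_int a + 2) * fps_const (fps_const (1 / 4)))
       = fps_const (V n (fps_of_poly [:of_int a, 1:] :: real fps))"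
proof -
  define Qy :: "real poly" where "Qy = [: (of_int a + 2) / 4, 1/4 :]"
  let ?H = "\<lambda>p. fps_of_poly (pcompose p Qy)"
  have Y: "(fps_const fps_X + of_int a + 2) * fps_const (fps_const (1 / 4)) = (fps_const (fps_of_poly Qy) :: real fps fps)"
  proof -
    have "fps_of_poly Qy = (fps_X + of_int a + 2) * fps_const (1/4)"
      by (rule fps_ext) (auto simp: Qy_def coeff_pCons' fps_of_int[symmetric] numeral_fps_const)
    then show ?thesis
      by (simp add: fps_of_int[symmetric] numeral_fps_const)
  qed
  have "2 * poly (map_poly (\<lambda>c. fps_const (fps_const c)) (te n)) (fps_const (fps_of_poly Qy))
      = fps_const (2 * ?H (E n))"
    unfolding pm1 pm2 te_E by (simp add: numeral_fps_const)
  also have "2 * ?H (E n) = ?H (smult 2 (E n))"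
    by (simp add: fps_of_poly_smult numeral_fps_const pcompose_smult)
  also have "\<dots> = ?H (V n [:-2, 4:])" by (simp add: E_V)
  also have "\<dots> = V n (?H [:-2, 4:])" by (rule V_hom[OF hom_fps_of_poly_pcompose])
  also have "?H [:-2, 4:] = fps_of_poly [:of_int a, 1:]"
    by (simp add: Qy_def pcompose_pCons field_simps)
  finally show ?thesis unfolding Y .
qed


definition dd :: "int \<Rightarrow> nat \<Rightarrow> real fps fps" where
  "dd a n = 1 + of_int a * fps_X ^ n + fps_X ^ (2 * n)"
definition ww :: "int \<Rightarrow> nat \<Rightarrow> real fps fps" where
  "ww a n = fps_X ^ n * inverse (dd a n)"
definition SS :: "nat \<Rightarrow> nat set set" where
  "SS t = {S. finite S \<and> card S = t \<and> (\<forall>n\<in>S. odd n)}"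

lemma dd_nth: "k < n \<Longrightarrow> dd a n $ k = (if k = 0 then 1 else 0)"
  by (simp add: dd_def fps_of_int[symmetric])

lemma dd_inv: "n \<ge> 1 \<Longrightarrow> dd a n * inverse (dd a n) = 1"
  by (rule fps_mult_inverse_1) (simp_all add: dd_nth)

lemma prod_ww_vanish:
  assumes "finite S" "n \<in> S" "k < n"
  shows "(\<Prod>i\<in>S. ww a i) $ k = 0"
proof -
  have "(\<Prod>i\<in>S. ww a i) = ww a n * (\<Prod>i\<in>S-{n}. ww a i)"
    using assms by (simp add: prod.remove)
  also have "\<dots> = fps_X ^ n * (inverse (dd a n) * (\<Prod>i\<in>S-{n}. ww a i))"
    by (simp add: ww_def mult.assoc)
  finally show ?thesis using assms(3) by (simp add: fps_X_power_mult_nth)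
qed

lemma Ut_eq: "(Ut a t :: real fps fps) = infsum (\<lambda>S. \<Prod>n\<in>S. ww a n) (SS t)"
  unfolding Ut_def ww_def dd_def SS_def ..

lemma Ut_summable: "(\<lambda>S. \<Prod>n\<in>S. ww a n) summable_on SS t"
proof (rule fps_summable_coeffwise)
  fix m
  show "\<exists>F. finite F \<and> F \<subseteq> SS t \<and> (\<forall>S\<in>SS t - F. (\<Prod>n\<in>S. ww a n) $ m = 0)"
  proof (intro exI[of _ "{S\<in>SS t. S \<subseteq> {..m}}"] conjI ballI)
    show "finite {S\<in>SS t. S \<subseteq> {..m}}" by (rule finite_subset[of _ "Pow {..m}"]) auto
    show "{S\<in>SS t. S \<subseteq> {..m}} \<subseteq> SS t" by auto
    fix S assume S: "S \<in> SS t - {S\<in>SS t. S \<subseteq> {..m}}"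
    then have "\<not> S \<subseteq> {..m}" by auto
    then obtain n where n: "n \<in> S" "n > m" by (auto simp: subset_iff not_le)
    show "(\<Prod>n\<in>S. ww a n) $ m = 0" by (rule prod_ww_vanish[of S n]) (use S n in \<open>auto simp: SS_def\<close>)
  qed
qed

lemma Ut_coeff:
  assumes "m < M"
  shows "(Ut a t :: real fps fps) $ m = (\<Sum>S\<in>{S\<in>SS t. S \<subseteq> {..<M}}. \<Prod>n\<in>S. ww a n) $ m"
  unfolding Ut_eq
proof (rule infsum_fps_coeff[OF Ut_summable])
  show "finite {S\<in>SS t. S \<subseteq> {..<M}}" by (rule finite_subset[of _ "Pow {..<M}"]) auto
  show "{S\<in>SS t. S \<subseteq> {..<M}} \<subseteq> SS t" by auto
  show "\<forall>S\<in>SS t - {S\<in>SS t. S \<subseteq> {..<M}}. (\<Prod>n\<in>S. ww a n) $ m = 0"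
  proof
    fix S assume S: "S \<in> SS t - {S\<in>SS t. S \<subseteq> {..<M}}"
    then have "\<not> S \<subseteq> {..<M}" by auto
    then obtain n where n: "n \<in> S" "n \<ge> M" by (auto simp: subset_iff not_less)
    show "(\<Prod>n\<in>S. ww a n) $ m = 0" by (rule prod_ww_vanish[of S n]) (use S n assms in \<open>auto simp: SS_def\<close>)
  qed
qed

lemma Ut_zero:
  assumes "m < t"
  shows "(Ut a t :: real fps fps) $ m = 0"
proof -
  have E: "{S\<in>SS t. S \<subseteq> {..<Suc m}} = {}"
  proof (rule ccontr)
    assume "{S\<in>SS t. S \<subseteq> {..<Suc m}} \<noteq> {}"
    then obtain S where S: "S \<in> SS t" "S \<subseteq> {..<Suc m}" by blast
    have "S \<subseteq> {1..m}"
    proof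
      fix x assume "x \<in> S"
      then have "x < Suc m" "odd x" using S by (auto simp: SS_def)
      then show "x \<in> {1..m}" using odd_pos[of x] by auto
    qed
    then have "card S \<le> m" using card_mono[of "{1..m}" S] by simp
    then show False using S assms by (simp add: SS_def)
  qed
  show ?thesis using Ut_coeff[of m "Suc m" a t] unfolding E by simp
qed

lemma LHS_coeff:
  assumes mN: "m < 2*N"
  shows "(\<Sum>\<^sub>\<infinity>t. Ut a t * fps_const (fps_X :: real fps) ^ t) $ m
       = (\<Prod>n\<in>{n. n < 2*N \<and> odd n}. 1 + fps_const fps_X * ww a n) $ m"
proof -
  define Od where "Od = {n. n < 2*N \<and> odd n}"
  have finOd: "finite Od" by (simp add: Od_def)
  let ?g = "\<lambda>t. (Ut a t :: real fps fps) * fps_const (fps_X :: real fps) ^ t"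
  have gm: "?g t $ k = Ut a t $ k * fps_X ^ t" for t k by simp
  have summ: "?g summable_on UNIV"
  proof (rule fps_summable_coeffwise)
    fix k show "\<exists>F. finite F \<and> F \<subseteq> UNIV \<and> (\<forall>t\<in>UNIV - F. ?g t $ k = 0)"
      by (intro exI[of _ "{..k}"]) (auto simp: gm Ut_zero)
  qed
  have "(\<Sum>\<^sub>\<infinity>t. ?g t) $ m = sum ?g {..2*N} $ m"
    by (rule infsum_fps_coeff[OF summ]) (use mN in \<open>auto simp: gm Ut_zero\<close>)
  also have "\<dots> = (\<Sum>t\<le>2*N. Ut a t $ m * fps_X ^ t)"
    by (simp add: fps_sum_nth gm)
  also have "\<dots> = (\<Sum>t\<le>2*N. (\<Sum>S\<in>{S\<in>Pow Od. card S = t}. (\<Prod>n\<in>S. ww a n) $ m * fps_X ^ card S))"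
  proof (rule sum.cong[OF refl])
    fix t assume "t \<in> {..2*N}"
    have set: "{S\<in>SS t. S \<subseteq> {..<2*N}} = {S\<in>Pow Od. card S = t}"
      by (auto simp: SS_def Od_def intro: finite_subset[of _ "{..<2*N}"])
    have "Ut a t $ m * fps_X ^ t = (\<Sum>S\<in>{S\<in>Pow Od. card S = t}. (\<Prod>n\<in>S. ww a n) $ m) * fps_X ^ t"
      using Ut_coeff[OF mN, of a t] unfolding set by (simp add: fps_sum_nth)
    also have "\<dots> = (\<Sum>S\<in>{S\<in>Pow Od. card S = t}. (\<Prod>n\<in>S. ww a n) $ m * fps_X ^ card S)"
      by (simp add: sum_distrib_right)
    finally show "Ut a t $ m * fps_X ^ t = (\<Sum>S\<in>{S\<in>Pow Od. card S = t}. (\<Prod>n\<in>S. ww a n) $ m * fps_X ^ card S)" .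
  qed
  also have "\<dots> = (\<Sum>S\<in>Pow Od. (\<Prod>n\<in>S. ww a n) $ m * fps_X ^ card S)"
  proof (rule sum.group)
    show "finite (Pow Od)" using finOd by simp
    show "finite {..2*N}" by simp
    show "card ` Pow Od \<subseteq> {..2*N}"
    proof
      fix c assume "c \<in> card ` Pow Od"
      then obtain S where "S \<subseteq> Od" "c = card S" by auto
      then have "c \<le> card Od" using finOd by (simp add: card_mono)
      also have "card Od \<le> card {..<2*N}" by (rule card_mono) (auto simp: Od_def)
      finally show "c \<in> {..2*N}" by simp
    qed
  qed
  also have "\<dots> = (\<Sum>S\<in>Pow Od. (\<Prod>n\<in>S. fps_const fps_X * ww a n) * (\<Prod>n\<in>Od-S. 1)) $ m"
  proof -
    have "(\<Prod>n\<in>S. fps_const fps_X * ww a n) = fps_const (fps_X ^ card S) * (\<Prod>n\<in>S. ww a n)" for S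
      by (simp add: prod.distrib)
    then show ?thesis by (simp add: fps_sum_nth mult.commute)
  qed
  also have "\<dots> = (\<Prod>n\<in>Od. fps_const fps_X * ww a n + 1) $ m"
    by (simp only: prod_add[OF finOd])
  finally show ?thesis by (simp add: Od_def add.commute)
qed

lemma fps_of_poly_lin: "fps_of_poly [:of_int a, 1:] = fps_X + (of_int a :: real fps)"
  by (simp add: fps_of_poly_linear fps_of_int)

lemma LHS_prod:
  "(\<Prod>n\<in>{n. n < 2*N \<and> odd n}. 1 + fps_const fps_X * ww a n)
    = (\<Prod>k\<in>{1..N}. 1 + fps_const (fps_of_poly [:of_int a, 1:]) * fps_X^(2*k-1) + fps_X^(2*(2*k-1)))
      * (\<Prod>k\<in>{1..N}. inverse (dd a (2*k-1)))"
proof -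
  have fac: "1 + fps_const fps_X * ww a n
      = (1 + fps_const (fps_of_poly [:of_int a, 1:]) * fps_X^n + fps_X^(2*n)) * inverse (dd a n)" if "n \<ge> 1" for n
  proof -
    have "1 + fps_const (fps_of_poly [:of_int a, 1:]) * fps_X^n + fps_X^(2*n) = dd a n + fps_const fps_X * fps_X^n"
      unfolding fps_of_poly_lin dd_def fps_of_int[symmetric] by (simp only: fps_const_add[symmetric] distrib_right add_ac)
    then have "(1 + fps_const (fps_of_poly [:of_int a, 1:]) * fps_X^n + fps_X^(2*n)) * inverse (dd a n)
        = dd a n * inverse (dd a n) + fps_const fps_X * (fps_X^n * inverse (dd a n))"
      by (simp add: algebra_simps)
    also have "\<dots> = 1 + fps_const fps_X * ww a n" using dd_inv[OF that] by (simp add: ww_def)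
    finally show ?thesis by simp
  qed
  have "(\<Prod>n\<in>{n. n < 2*N \<and> odd n}. 1 + fps_const fps_X * ww a n)
      = (\<Prod>k\<in>{1..N}. 1 + fps_const fps_X * ww a (2*k-1))"
    by (rule prod.reindex_bij_witness[of _ "\<lambda>k. 2*k-1" "\<lambda>n. (n+1) div 2"]) (auto elim!: oddE)
  also have "\<dots> = (\<Prod>k\<in>{1..N}. (1 + fps_const (fps_of_poly [:of_int a, 1:]) * fps_X^(2*k-1) + fps_X^(2*(2*k-1)))
                     * inverse (dd a (2*k-1)))"
    by (rule prod.cong[OF refl]) (rule fac, auto)
  finally show ?thesis by (simp add: prod.distrib)
qed


lemma g_eqv:
  assumes n: "n \<ge> 1"
  shows "eqv (2*n-1) (inverse (dd a (2*n-1) * (1 - fps_X^(2*n)))) 1"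
proof -
  let ?e = "dd a (2*n-1) * (1 - fps_X^(2*n))"
  have e0: "?e $ 0 = 1" using n by (simp add: dd_nth)
  have d: "eqv (2*n-1) (dd a (2*n-1)) 1" unfolding eqv_def using dd_nth by simp
  have x: "eqv (2*n-1) (1 - fps_X^(2*n)) (1 :: real fps fps)" by (rule eqv_one_minus_Xpow) simp
  have "eqv (2*n-1) ?e (1*1)" by (rule eqv_mult[OF d x])
  then have "eqv (2*n-1) ?e 1" by simp
  moreover have "?e * inverse ?e = 1" by (rule fps_mult_inverse_1[OF e0]) simp
  ultimately show ?thesis by (rule eqv_inverse1)
qed

lemma infprod_coeff:
  assumes kN: "k \<le> 2*N"
  shows "fps_infprod (\<lambda>n. inverse ((1 + of_int a * fps_X ^ (2 * n - 1) + fps_X ^ (2 * (2 * n - 1)))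
                              * (1 - fps_X ^ (2 * n)))) $ k
       = (\<Prod>n\<in>{1..N}. inverse (dd a (2*n-1) * (1 - fps_X^(2*n)))) $ k"
proof -
  define P where "P = (\<lambda>N. \<Prod>n\<in>{1..N}. inverse (dd a (2*n-1) * (1 - fps_X^(2*n))))"
  have fi: "fps_infprod (\<lambda>n. inverse ((1 + of_int a * fps_X ^ (2 * n - 1) + fps_X ^ (2 * (2 * n - 1)))
                              * (1 - fps_X ^ (2 * n)))) = lim P"
    unfolding fps_infprod_def P_def dd_def ..
  have stab: "eqv M (P N2) (P N1)" if "M \<le> 2*N1+1" "N1 \<le> N2" for M N1 N2
    unfolding P_def by (rule prod_stable[OF g_eqv that])
  have "\<exists>N0. \<forall>N\<ge>N0. P N $ j = P N0 $ j" for j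
  proof (intro exI[of _ j] allI impI)
    fix N assume "j \<le> N"
    then show "P N $ j = P j $ j" by (intro eqv_coeff stab) auto
  qed
  then obtain N1 where N1: "\<forall>N'\<ge>N1. lim P $ k = P N' $ k"
    using lim_fps_coeff[of P k] by blast
  have "lim P $ k = P (max N1 N) $ k" using N1 by simp
  also have "\<dots> = P N $ k" by (rule eqv_coeff, rule stab) (use kN in auto)
  finally show ?thesis unfolding fi P_def .
qed

lemma ser_coeff:
  fixes T :: "nat \<Rightarrow> real fps fps"
  assumes kN: "k \<le> N"
  shows "(\<Sum>\<^sub>\<infinity>n\<in>{1..}. T n * fps_X ^ (n^2)) $ k = (\<Sum>n\<in>{1..N}. T n * fps_X ^ (n^2)) $ k"
proof -
  have van: "(T n * fps_X ^ (n^2)) $ j = 0" if "j < n" for n j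
  proof -
    have "n \<le> n^2" by (simp add: power2_eq_square)
    then show ?thesis using that by (simp add: fps_X_power_mult_right_nth)
  qed
  have summ: "(\<lambda>n. T n * fps_X ^ (n^2)) summable_on {1..}"
  proof (rule fps_summable_coeffwise)
    fix j show "\<exists>F. finite F \<and> F \<subseteq> {1..} \<and> (\<forall>n\<in>{1..} - F. (T n * fps_X ^ (n^2)) $ j = 0)"
      by (intro exI[of _ "{1..j}"]) (auto intro!: van)
  qed
  show ?thesis
    by (rule infsum_fps_coeff[OF summ]) (use kN in \<open>auto intro!: van\<close>)
qed

lemma pcompose_X_left: "pcompose [:0, 1:] q = (q :: 'a::comm_ring_1 poly)"
  by (simp add: pcompose_pCons)

theorem mainTheorem1:
  fixes a :: int
  assumes "a \<in> {-2, -1, 0, 1, 2}"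
  shows "(\<Sum>\<^sub>\<infinity>t. Ut a t * fps_const (fps_X :: real fps) ^ t) =
    fps_infprod (\<lambda>n. inverse ((1 + of_int a * fps_X ^ (2 * n - 1) + fps_X ^ (2 * (2 * n - 1)))
                              * (1 - fps_X ^ (2 * n))))
    * (1 + 2 * (\<Sum>\<^sub>\<infinity>n\<in>{1..}. poly (map_poly (\<lambda>c. fps_const (fps_const c)) (te n))
                    ((fps_const fps_X + of_int a + 2) * fps_const (fps_const (1 / 4)))
                  * fps_X ^ (n ^ 2)))"
proof (rule fps_ext)
  fix m
  define N where "N = Suc m"
  define c0 where "c0 = (fps_of_poly [:of_int a, 1:] :: real fps)"
  define T where "T = (\<lambda>n. poly (map_poly (\<lambda>c. fps_const (fps_const c)) (te n))
                    ((fps_const fps_X + of_int a + 2) * fps_const (fps_const (1 / 4))) :: real fps fps)"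
  define g where "g = (\<lambda>n. inverse ((1 + of_int a * fps_X ^ (2 * n - 1) + fps_X ^ (2 * (2 * n - 1)))
                              * (1 - fps_X ^ (2 * n))) :: real fps fps)"
  define A where "A = (\<Prod>k\<in>{1..N}. 1 + fps_const c0 * fps_X^(2*k-1) + fps_X^(2*(2*k-1)) :: real fps fps)"
  define D where "D = (\<Prod>k\<in>{1..N}. inverse (dd a (2*k-1)))"
  define PN where "PN = (\<Prod>n\<in>{1..N}. inverse (dd a (2*n-1) * (1 - fps_X^(2*n))))"
  define SN where "SN = (\<Sum>n\<in>{1..N}. T n * fps_X ^ (n^2))"
  have L: "(\<Sum>\<^sub>\<infinity>t. Ut a t * fps_const (fps_X :: real fps) ^ t) $ m = (A * D) $ m"
    using LHS_coeff[where m=m and N=N and a=a] LHS_prod[where N=N and a=a] by (simp add: N_def c0_def A_def D_def)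
  have PNpp: "PN * pp N = D"
  proof -
    have "PN * pp N = (\<Prod>n\<in>{1..N}. inverse (dd a (2*n-1) * (1 - fps_X^(2*n))) * (1 - fps_X^(2*n)))"
      unfolding PN_def pp_def by (simp add: prod.distrib)
    also have "\<dots> = D" unfolding D_def
    proof (rule prod.cong[OF refl])
      fix n :: nat assume n: "n \<in> {1..N}"
      have d0: "dd a (2*n-1) $ 0 = 1" using n by (simp add: dd_nth)
      have x0: "(1 - fps_X^(2*n) :: real fps fps) $ 0 = 1" using n by simp
      have "inverse (dd a (2*n-1) * (1 - fps_X^(2*n))) * (1 - fps_X^(2*n))
          = inverse (dd a (2*n-1)) * ((1 - fps_X^(2*n)) * inverse (1 - fps_X^(2*n)))"
      proof -
        have iv: "inverse (dd a (2*n-1) * (1 - fps_X^(2*n))) = inverse (dd a (2*n-1)) * inverse (1 - fps_X^(2*n))"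
          by (rule fps_inverse_mult_1[OF d0 x0]) simp
        show ?thesis unfolding iv by (simp only: mult_ac)
      qed
      also have "\<dots> = inverse (dd a (2*n-1))"
        using fps_mult_inverse_1[OF x0] by simp
      finally show "inverse (dd a (2*n-1) * (1 - fps_X^(2*n))) * (1 - fps_X^(2*n)) = inverse (dd a (2*n-1))" .
    qed
    finally show ?thesis .
  qed
  have R1: "eqv (Suc m) (fps_infprod g * (1 + 2 * (\<Sum>\<^sub>\<infinity>n\<in>{1..}. T n * fps_X ^ (n ^ 2)))) (PN * (1 + 2 * SN))"
  proof (rule eqv_mult)
    show "eqv (Suc m) (fps_infprod g) PN"
      unfolding eqv_def g_def PN_def
    proof (intro allI impI)
      fix k assume "k < Suc m"
      then show "fps_infprod (\<lambda>n. inverse ((1 + of_int a * fps_X ^ (2 * n - 1) + fps_X ^ (2 * (2 * n - 1)))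
                              * (1 - fps_X ^ (2 * n)))) $ k
       = (\<Prod>n\<in>{1..N}. inverse (dd a (2*n-1) * (1 - fps_X^(2*n)))) $ k"
        by (intro infprod_coeff) (simp add: N_def)
    qed
    have "eqv (Suc m) (\<Sum>\<^sub>\<infinity>n\<in>{1..}. T n * fps_X ^ (n ^ 2)) SN"
      unfolding eqv_def SN_def
    proof (intro allI impI)
      fix k assume "k < Suc m"
      then show "(\<Sum>\<^sub>\<infinity>n\<in>{1..}. T n * fps_X ^ (n ^ 2)) $ k = (\<Sum>n\<in>{1..N}. T n * fps_X ^ (n^2)) $ k"
        by (intro ser_coeff) (simp add: N_def)
    qed
    then show "eqv (Suc m) (1 + 2 * (\<Sum>\<^sub>\<infinity>n\<in>{1..}. T n * fps_X ^ (n ^ 2))) (1 + 2 * SN)"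
      by (intro eqv_add eqv_mult eqv_refl)
  qed
  have R2: "1 + 2 * SN = RHSN N c0"
  proof -
    have "2 * SN = (\<Sum>n\<in>{1..N}. fps_const (V n c0) * fps_X^(n^2))"
      unfolding SN_def sum_distrib_left
      by (rule sum.cong[OF refl]) (simp add: mult.assoc[symmetric] T_def te_val c0_def)
    then show ?thesis by (simp add: RHSN_def)
  qed
  have R3: "eqv (Suc m) (RHSN N c0) (LHSN N c0)"
    unfolding eqv_def
  proof (intro allI impI)
    fix k assume "k < Suc m"
    then have "k \<le> N" by (simp add: N_def)
    from generic_case[OF hom_fps_of_poly_pcompose this, of "[:of_int a, 1:]"]
    show "RHSN N c0 $ k = LHSN N c0 $ k" by (simp add: pcompose_X_left c0_def)
  qed
  have R4: "PN * LHSN N c0 = A * D"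
    unfolding LHSN_def A_def[symmetric] PNpp[symmetric] by (simp add: ac_simps)
  have "(fps_infprod g * (1 + 2 * (\<Sum>\<^sub>\<infinity>n\<in>{1..}. T n * fps_X ^ (n ^ 2)))) $ m = (PN * (1 + 2 * SN)) $ m"
    using R1 by (rule eqv_coeff)
  also have "\<dots> = (PN * LHSN N c0) $ m"
    unfolding R2 by (rule eqv_coeff, rule eqv_mult[OF eqv_refl R3])
  also have "\<dots> = (A * D) $ m" by (simp add: R4)
  finally have F: "(fps_infprod g * (1 + 2 * (\<Sum>\<^sub>\<infinity>n\<in>{1..}. T n * fps_X ^ (n ^ 2)))) $ m = (A * D) $ m" .
  show "(\<Sum>\<^sub>\<infinity>t. Ut a t * fps_const (fps_X :: real fps) ^ t) $ m =
    (fps_infprod (\<lambda>n. inverse ((1 + of_int a * fps_X ^ (2 * n - 1) + fps_X ^ (2 * (2 * n - 1)))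
                              * (1 - fps_X ^ (2 * n))))
    * (1 + 2 * (\<Sum>\<^sub>\<infinity>n\<in>{1..}. poly (map_poly (\<lambda>c. fps_const (fps_const c)) (te n))
                    ((fps_const fps_X + of_int a + 2) * fps_const (fps_const (1 / 4)))
                  * fps_X ^ (n ^ 2)))) $ m"
    using F unfolding L T_def g_def by (rule sym)
qed


end
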